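(* Let $r\ge 2$ be an integer. There is a constant $c_r>0$ depending only on $r$ such that the following holds. Let $G=(V,E)$ be a graph with $|V|=n$, where $n$ is sufficiently large (depending on $r$), and let $T\subseteq E^r$ be a set of $r$-tuples of edges. Then $V$ can be partitioned into disjoint sets $V_1,\ldots,V_r$, each of size $\lceil n/r\rceil$ or $\lfloor n/r \rfloor$, such that at least $c_r|T|$ of the tuples in $T$ consist only of edges each of which has both of its endpoints in the same part $V_j$ (different edges of a tuple may lie in different parts). *)

theory Defs
  imports Complex_Main
begin

definition is_graph :: "'a set \<Rightarrow> 'a set set \<Rightarrow> bool" where
  "is_graph V E \<longleftrightarrow> finite V \<and> (\<forall>e\<in>E. e \<subseteq> V \<and> card e = 2)"

definition balanced_partition :: "nat \<Rightarrow> 'a set \<Rightarrow> (nat \<Rightarrow> 'a set) \<Rightarrow> bool" where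
  "balanced_partition r V P \<longleftrightarrow>
     (\<Union>j<r. P j) = V \<and>
     (\<forall>i<r. \<forall>j<r. i \<noteq> j \<longrightarrow> P i \<inter> P j = {}) \<and>
     (\<forall>j<r. int (card (P j)) = \<lfloor>real (card V) / real r\<rfloor> \<or>
            int (card (P j)) = \<lceil>real (card V) / real r\<rceil>)"

end

theory Submission
  imports Defs
begin


lemma card_mod_class:
  assumes "0 < r" "j < r"
  shows "card {i. i < N \<and> i mod r = j} = N div r + (if j < N mod r then 1 else 0)"
proof (induction N rule: less_induct)
  case (less N)
  show ?case
  proof (cases "N < r")
    case True
    then have "{i. i < N \<and> i mod r = j} = (if j < N then {j} else {})" using assms by auto
    then show ?thesis using True by simp
  next
    case False
    then obtain M where M: "N = M + r" by (metis add.commute le_add_diff_inverse not_less)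
    have eq: "{i. i < N \<and> i mod r = j} = insert j ((\<lambda>i. i + r) ` {i. i < M \<and> i mod r = j})"
    proof
      show "{i. i < N \<and> i mod r = j} \<subseteq> insert j ((\<lambda>i. i + r) ` {i. i < M \<and> i mod r = j})"
      proof
        fix i assume i: "i \<in> {i. i < N \<and> i mod r = j}"
        show "i \<in> insert j ((\<lambda>i. i + r) ` {i. i < M \<and> i mod r = j})"
        proof (cases "i < r")
          case True then show ?thesis using i by auto
        next
          case False
          then have "i = (i - r) + r" "(i - r) mod r = j" "i - r < M"
            using i M le_mod_geq[of r i] by auto
          then show ?thesis by (metis (mono_tags, lifting) image_eqI insertI2 mem_Collect_eq)
        qed
      qed
    next
      show "insert j ((\<lambda>i. i + r) ` {i. i < M \<and> i mod r = j}) \<subseteq> {i. i < N \<and> i mod r = j}"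
        using assms M by auto
    qed
    have nj: "j \<notin> (\<lambda>i. i + r) ` {i. i < M \<and> i mod r = j}" using assms by auto
    have "card {i. i < N \<and> i mod r = j} = Suc (card {i. i < M \<and> i mod r = j})"
      unfolding eq using nj by (simp add: card_image)
    moreover have "M < N" using M assms by simp
    ultimately show ?thesis using less.IH[of M] M assms by simp
  qed
qed

lemma ceil_div_nat:
  assumes "0 < r" "n mod r \<noteq> 0"
  shows "\<lceil>real n / real r\<rceil> = int (n div r) + 1"
proof -
  have "real n = real (r * (n div r) + n mod r)" by simp
  also have "\<dots> = real r * real (n div r) + real (n mod r)" by (simp only: of_nat_add of_nat_mult)
  finally have e: "real n = real r * real (n div r) + real (n mod r)" .
  have "n mod r < r" using assms by simp
  then have "real (n mod r) < real r" by simp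
  have "real n / real r = real (n div r) + real (n mod r) / real r"
    using assms by (simp add: e add_divide_distrib)
  moreover have "0 < real (n mod r) / real r" "real (n mod r) / real r \<le> 1"
    using assms \<open>n mod r < r\<close> by auto
  ultimately show ?thesis by (intro ceiling_unique) auto
qed

lemma ceil_div_nat0:
  assumes "0 < r" "n mod r = 0"
  shows "\<lceil>real n / real r\<rceil> = int (n div r)"
proof -
  have "r dvd n" using assms by auto
  then have "real n / real r = real (n div r)" by (simp add: real_of_nat_div)
  then show ?thesis by simp
qed

lemma balanced_extend:
  assumes "finite V" "r \<ge> 1" "S \<subseteq> V" "card S = card V div r"
  shows "\<exists>P. balanced_partition r V P \<and> P (r - 1) = S"
proof -
  define n where "n = card V"
  define C where "C j = {i. i < n \<and> i mod r = j}" for j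
  define R where "R = C (r - 1)"
  have r0: "0 < r" using assms by simp
  have cardC: "card (C j) = n div r + (if j < n mod r then 1 else 0)" if "j < r" for j
    unfolding C_def using card_mod_class[OF r0 that] .
  have "n mod r < r" using r0 by simp
  then have "\<not> r - 1 < n mod r" by linarith
  then have cR: "card R = n div r" unfolding R_def using cardC[of "r-1"] r0 by simp
  have Rsub: "R \<subseteq> {..<n}" unfolding R_def C_def by auto
  have fS: "finite S" using assms finite_subset by blast
  obtain h1 where h1: "bij_betw h1 R S"
    using finite_same_card_bij[of R S] cR assms fS Rsub finite_subset n_def by fastforce
  have "card ({..<n} - R) = card (V - S)"
    using card_Diff_subset[OF _ Rsub] card_Diff_subset[OF fS assms(3)] cR assms n_def
    by (metis card_lessThan finite_subset Rsub finite_lessThan)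
  then obtain h2 where h2: "bij_betw h2 ({..<n} - R) (V - S)"
    using finite_same_card_bij assms(1) by blast
  define g where "g i = (if i \<in> R then h1 i else h2 i)" for i
  have g1: "bij_betw g R S" using h1 by (rule bij_betw_cong[THEN iffD1, rotated]) (simp add: g_def)
  have g2: "bij_betw g ({..<n} - R) (V - S)"
    using h2 by (rule bij_betw_cong[THEN iffD1, rotated]) (simp add: g_def)
  have "bij_betw g (R \<union> ({..<n} - R)) (S \<union> (V - S))"
    by (rule bij_betw_combine[OF g1 g2]) auto
  moreover have "R \<union> ({..<n} - R) = {..<n}" "S \<union> (V - S) = V" using Rsub assms by auto
  ultimately have g: "bij_betw g {..<n} V" by simp
  then have ginj: "inj_on g {..<n}" and gim: "g ` {..<n} = V"
    by (auto simp: bij_betw_def)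
  define P where "P j = g ` C j" for j
  have Csub: "C j \<subseteq> {..<n}" for j unfolding C_def by auto
  have "P (r - 1) = S" unfolding P_def R_def[symmetric] using g1 by (simp add: bij_betw_def)
  moreover have "(\<Union>j<r. P j) = V"
  proof -
    have "(\<Union>j<r. C j) = {..<n}" unfolding C_def using r0 by auto
    then have "(\<Union>j<r. P j) = g ` {..<n}" unfolding P_def by (metis image_UN)
    then show ?thesis using gim by simp
  qed
  moreover have "\<forall>i<r. \<forall>j<r. i \<noteq> j \<longrightarrow> P i \<inter> P j = {}"
  proof (intro allI impI)
    fix i j assume "i < r" "j < r" "i \<noteq> j"
    then have "C i \<inter> C j = {}" unfolding C_def by auto
    then show "P i \<inter> P j = {}" unfolding P_def
      using inj_on_image_Int[OF ginj Csub Csub] by (metis image_empty)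
  qed
  moreover have "\<forall>j<r. int (card (P j)) = \<lfloor>real (card V) / real r\<rfloor> \<or>
            int (card (P j)) = \<lceil>real (card V) / real r\<rceil>"
  proof (intro allI impI)
    fix j assume j: "j < r"
    have cP: "card (P j) = n div r + (if j < n mod r then 1 else 0)"
      unfolding P_def using card_image[OF inj_on_subset[OF ginj Csub]] cardC[OF j] by simp
    have fl: "\<lfloor>real n / real r\<rfloor> = int (n div r)" by (simp add: floor_divide_of_nat_eq)
    show "int (card (P j)) = \<lfloor>real (card V) / real r\<rfloor> \<or>
            int (card (P j)) = \<lceil>real (card V) / real r\<rceil>"
    proof (cases "j < n mod r")
      case True
      then have "n mod r \<noteq> 0" by simp
      then show ?thesis using ceil_div_nat[OF r0] cP True n_def by simp
    next
      case False then show ?thesis using cP fl n_def by simp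
    qed
  qed
  ultimately show ?thesis unfolding balanced_partition_def by blast
qed



lemma card_supersets:
  assumes "finite V" "W \<subseteq> V" "card W \<le> m"
  shows "card {S. S \<subseteq> V \<and> card S = m \<and> W \<subseteq> S} = (card V - card W) choose (m - card W)"
proof -
  have fW: "finite W" using assms finite_subset by blast
  have "bij_betw (\<lambda>S. S - W) {S. S \<subseteq> V \<and> card S = m \<and> W \<subseteq> S} {X. X \<subseteq> V - W \<and> card X = m - card W}"
  proof (rule bij_betw_byWitness[where f'="\<lambda>X. X \<union> W"])
    show "\<forall>a\<in>{S. S \<subseteq> V \<and> card S = m \<and> W \<subseteq> S}. a - W \<union> W = a" by auto
    show "\<forall>a'\<in>{X. X \<subseteq> V - W \<and> card X = m - card W}. a' \<union> W - W = a'" by auto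
    show "(\<lambda>S. S - W) ` {S. S \<subseteq> V \<and> card S = m \<and> W \<subseteq> S} \<subseteq> {X. X \<subseteq> V - W \<and> card X = m - card W}"
      using fW by (auto simp: card_Diff_subset)
    show "(\<lambda>X. X \<union> W) ` {X. X \<subseteq> V - W \<and> card X = m - card W} \<subseteq> {S. S \<subseteq> V \<and> card S = m \<and> W \<subseteq> S}"
    proof
      fix S assume "S \<in> (\<lambda>X. X \<union> W) ` {X. X \<subseteq> V - W \<and> card X = m - card W}"
      then obtain X where X: "X \<subseteq> V - W" "card X = m - card W" "S = X \<union> W" by auto
      have "finite X" using X assms finite_subset by blast
      moreover have "X \<inter> W = {}" using X by auto
      ultimately have "card S = card X + card W" using X fW by (simp add: card_Un_disjoint)
      then show "S \<in> {S. S \<subseteq> V \<and> card S = m \<and> W \<subseteq> S}" using X assms by auto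
    qed
  qed
  then have "card {S. S \<subseteq> V \<and> card S = m \<and> W \<subseteq> S} = card {X. X \<subseteq> V - W \<and> card X = m - card W}"
    by (rule bij_betw_same_card)
  also have "\<dots> = card (V - W) choose (m - card W)" using assms by (simp add: n_subsets)
  also have "card (V - W) = card V - card W" using assms fW by (simp add: card_Diff_subset)
  finally show ?thesis .
qed

lemma ratio_bound:
  fixes r n m w :: nat
  assumes "w \<le> m" "m \<le> n" "0 < n" "w \<le> 2*r" "n \<le> 2*r*m" "0 < r"
  shows "real (n choose m) * (1 / (4 * real r ^ 2)) ^ (2*r) \<le> real ((n - w) choose (m - w))"
proof -
  define b :: real where "b = 1 / (4 * real r ^ 2)"
  have "1 \<le> real r" using assms by simp
  then have "1 \<le> real r ^ 2" by (simp add: one_le_power)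
  then have q: "1 \<le> 4 * real r ^ 2" by linarith
  have b0: "0 \<le> b" "b \<le> 1" unfolding b_def using q by (auto simp: divide_le_eq)
  have bw: "b ^ (2*r) \<le> b ^ w" using power_decreasing[OF assms(4) b0] .
  have c0: "0 \<le> real (n choose m)" by simp
  have key: "real (n choose m) * b ^ w \<le> real ((n - w) choose (m - w))"
  proof (cases "w = 0")
    case True then show ?thesis by simp
  next
    case False
    have id: "real (n choose m) * real (m choose w) = real (n choose w) * real ((n - w) choose (m - w))"
      using choose_mult[OF assms(1,2)] by (metis of_nat_mult)
    have lo: "(real m / real w) ^ w \<le> real (m choose w)" using binomial_ge_n_over_k_pow_k[OF assms(1)] by simp
    have hi: "real (n choose w) \<le> real n ^ w"
      using binomial_le_pow[of w n] assms by (metis of_nat_le_iff of_nat_power order.trans)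
    have "b * real n \<le> real m / real w"
    proof -
      have "real w * real n \<le> 2 * real r * real n" using assms by simp
      also have "\<dots> \<le> 2 * real r * (2 * real r * real m)"
        using assms by (metis mult_left_mono of_nat_0_le_iff of_nat_le_iff of_nat_mult of_nat_numeral mult_nonneg_nonneg)
      finally have "real w * real n \<le> 4 * real r ^ 2 * real m" by (simp add: power2_eq_square algebra_simps)
      then show ?thesis using False assms unfolding b_def by (simp add: field_simps)
    qed
    then have "(b * real n) ^ w \<le> (real m / real w) ^ w"
      using b0 by (intro power_mono) auto
    then have "b ^ w * real n ^ w \<le> real (m choose w)" using lo by (simp add: power_mult_distrib)
    then have "real (n choose m) * (b ^ w * real n ^ w) \<le> real (n choose w) * real ((n - w) choose (m - w))"
      using id c0 by (metis mult_left_mono)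
    also have "\<dots> \<le> real n ^ w * real ((n - w) choose (m - w))"
      using hi by (intro mult_right_mono) auto
    finally have "(real (n choose m) * b ^ w) * real n ^ w \<le> real ((n - w) choose (m - w)) * real n ^ w"
      by (simp add: algebra_simps)
    moreover have "0 < real n ^ w" using assms by simp
    ultimately show ?thesis by simp
  qed
  have "real (n choose m) * b ^ (2*r) \<le> real (n choose m) * b ^ w" using bw c0 by (rule mult_left_mono)
  then show ?thesis using key unfolding b_def by linarith
qed



lemma card_filter_sum:
  assumes "finite A"
  shows "real (card {x\<in>A. P x}) = (\<Sum>x\<in>A. if P x then 1 else 0)"
proof -
  have "(\<Sum>x\<in>A. if P x then (1::real) else 0) = (\<Sum>x\<in>{x\<in>A. P x}. 1)"
    using sum.inter_filter[OF assms, of "\<lambda>_. (1::real)" P] by simp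
  then show ?thesis by simp
qed

theorem lemma2p5:
  fixes r :: nat
  assumes "r \<ge> 2"
  shows "\<exists>c::real. c > 0 \<and> (\<exists>N::nat. \<forall>n\<ge>N. \<forall>(V::nat set) (E::nat set set) (T::nat set list set).
           is_graph V E \<and> card V = n \<and> T \<subseteq> {ts. length ts = r \<and> set ts \<subseteq> E} \<longrightarrow>
           (\<exists>P. balanced_partition r V P \<and>
                real (card {ts\<in>T. \<forall>e\<in>set ts. \<exists>j<r. e \<subseteq> P j}) \<ge> c * real (card T)))"
proof -
  define c :: real where "c = (1 / (4 * real r ^ 2)) ^ (2*r)"
  have r0: "0 < r" using assms by simp
  have c0: "c > 0" using r0 by (simp add: c_def)
  have hN: "\<exists>N::nat. \<forall>n\<ge>N. \<forall>(V::nat set) (E::nat set set) (T::nat set list set).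
           is_graph V E \<and> card V = n \<and> T \<subseteq> {ts. length ts = r \<and> set ts \<subseteq> E} \<longrightarrow>
           (\<exists>P. balanced_partition r V P \<and>
                real (card {ts\<in>T. \<forall>e\<in>set ts. \<exists>j<r. e \<subseteq> P j}) \<ge> c * real (card T))"
  proof (intro exI[of _ "4*r*r"] allI impI)
    fix n :: nat and V :: "nat set" and E :: "nat set set" and T :: "nat set list set"
    assume nN: "4*r*r \<le> n"
      and H: "is_graph V E \<and> card V = n \<and> T \<subseteq> {ts. length ts = r \<and> set ts \<subseteq> E}"
    have fV: "finite V" and Esub: "\<forall>e\<in>E. e \<subseteq> V \<and> card e = 2" and cV: "card V = n"
      and Tsub: "T \<subseteq> {ts. length ts = r \<and> set ts \<subseteq> E}"
      using H by (auto simp: is_graph_def)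
    define m where "m = n div r"
    have "(4*r*r) div r \<le> n div r" using nN by (rule div_le_mono)
    moreover have "(4*r*r) div r = 4*r" using r0 by simp
    ultimately have m_ge: "2*r \<le> m" unfolding m_def by simp
    have mn: "m \<le> n" unfolding m_def by simp
    have "n = r*m + n mod r" unfolding m_def by simp
    moreover have "n mod r < r" using r0 by simp
    moreover have "r \<le> r*m" using m_ge by simp
    ultimately have n2: "n \<le> 2*r*m" by linarith
    have n0: "0 < n" using m_ge mn r0 by linarith
    define W where "W ts = \<Union>(set ts)" for ts :: "nat set list"
    have Wts: "W ts \<subseteq> V \<and> card (W ts) \<le> 2*r" if ts: "ts \<in> T" for ts
    proof
      have sE: "set ts \<subseteq> E" and lt: "length ts = r" using ts Tsub by auto
      show "W ts \<subseteq> V" unfolding W_def using sE Esub by blast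
      have "card (W ts) \<le> sum card (set ts)" unfolding W_def by (rule card_Union_le_sum_card)
      also have "sum card (set ts) = sum (\<lambda>_. 2) (set ts)"
        using sE Esub by (intro sum.cong) auto
      also have "\<dots> = 2 * card (set ts)" by simp
      also have "\<dots> \<le> 2 * length ts" by (simp add: card_length)
      finally show "card (W ts) \<le> 2*r" using lt by simp
    qed
    have "E \<subseteq> Pow V" using Esub by auto
    then have fE: "finite E" using fV by (simp add: finite_subset)
    have fT: "finite T"
    proof (rule finite_subset[OF _ finite_lists_length_eq[OF fE, of r]])
      show "T \<subseteq> {xs. set xs \<subseteq> E \<and> length xs = r}" using Tsub by auto
    qed
    define SS where "SS = {S. S \<subseteq> V \<and> card S = m}"
    have fSS: "finite SS" unfolding SS_def using fV by simp
    have cSS: "card SS = n choose m" unfolding SS_def using n_subsets[OF fV] cV by simp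
    have "0 < card SS" using cSS zero_less_binomial[OF mn] by simp
    then have SSne: "SS \<noteq> {}" by auto
    have per: "c * real (card SS) \<le> real (card {S\<in>SS. W ts \<subseteq> S})" if ts: "ts \<in> T" for ts
    proof -
      have "{S\<in>SS. W ts \<subseteq> S} = {S. S \<subseteq> V \<and> card S = m \<and> W ts \<subseteq> S}" unfolding SS_def by auto
      moreover have "card {S. S \<subseteq> V \<and> card S = m \<and> W ts \<subseteq> S} = (n - card (W ts)) choose (m - card (W ts))"
        using card_supersets[OF fV, of "W ts" m] Wts[OF ts] m_ge cV by simp
      moreover have "real (n choose m) * c \<le> real ((n - card (W ts)) choose (m - card (W ts)))"
        unfolding c_def using ratio_bound[of "card (W ts)" m n r] Wts[OF ts] m_ge mn n0 n2 r0 by simp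
      ultimately show ?thesis using cSS by (simp add: mult.commute)
    qed
    have "(\<Sum>S\<in>SS. real (card {ts\<in>T. W ts \<subseteq> S})) = (\<Sum>S\<in>SS. \<Sum>ts\<in>T. if W ts \<subseteq> S then 1 else 0)"
      using fT by (simp add: card_filter_sum)
    also have "\<dots> = (\<Sum>ts\<in>T. \<Sum>S\<in>SS. if W ts \<subseteq> S then 1 else 0)" by (rule sum.swap)
    also have "\<dots> = (\<Sum>ts\<in>T. real (card {S\<in>SS. W ts \<subseteq> S}))"
      using fSS by (simp add: card_filter_sum)
    also have "\<dots> \<ge> (\<Sum>ts\<in>T. c * real (card SS))" using per by (intro sum_mono) auto
    finally have big: "(\<Sum>S\<in>SS. real (card {ts\<in>T. W ts \<subseteq> S})) \<ge> real (card T) * (c * real (card SS))"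
      by simp
    have "\<exists>S\<in>SS. real (card {ts\<in>T. W ts \<subseteq> S}) \<ge> c * real (card T)"
    proof (rule ccontr)
      assume "\<not> ?thesis"
      then have "\<forall>S\<in>SS. real (card {ts\<in>T. W ts \<subseteq> S}) < c * real (card T)" by (simp add: not_le)
      then have "(\<Sum>S\<in>SS. real (card {ts\<in>T. W ts \<subseteq> S})) < (\<Sum>S\<in>SS. c * real (card T))"
        using fSS SSne by (intro sum_strict_mono) auto
      moreover have "(\<Sum>S\<in>SS. c * real (card T)) = real (card T) * (c * real (card SS))" by simp
      ultimately show False using big by linarith
    qed
    then obtain S where S: "S \<in> SS" "real (card {ts\<in>T. W ts \<subseteq> S}) \<ge> c * real (card T)" by blast
    have SV: "S \<subseteq> V" and cS: "card S = card V div r" using S(1) cV unfolding SS_def m_def by auto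
    have r1: "1 \<le> r" using r0 by simp
    obtain P where P: "balanced_partition r V P" "P (r - 1) = S"
      using balanced_extend[OF fV r1 SV cS] by blast
    have "{ts\<in>T. W ts \<subseteq> S} \<subseteq> {ts\<in>T. \<forall>e\<in>set ts. \<exists>j<r. e \<subseteq> P j}"
    proof safe
      fix ts e assume "ts \<in> T" "W ts \<subseteq> S" "e \<in> set ts"
      then have "e \<subseteq> P (r - 1)" using P(2) unfolding W_def by auto
      then show "\<exists>j<r. e \<subseteq> P j" using r0 by (intro exI[of _ "r - 1"]) auto
    qed
    then have "card {ts\<in>T. W ts \<subseteq> S} \<le> card {ts\<in>T. \<forall>e\<in>set ts. \<exists>j<r. e \<subseteq> P j}"
      using fT by (intro card_mono) auto
    then have "c * real (card T) \<le> real (card {ts\<in>T. \<forall>e\<in>set ts. \<exists>j<r. e \<subseteq> P j})"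
      using S(2) by linarith
    then show "\<exists>P. balanced_partition r V P \<and>
                real (card {ts\<in>T. \<forall>e\<in>set ts. \<exists>j<r. e \<subseteq> P j}) \<ge> c * real (card T)"
      using P by blast
  qed
  show ?thesis by (rule exI[of _ c], rule conjI[OF c0 hN])
qed

end
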